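(* Let $z_o\in\mathbb{C}$ with $\mathrm{Im}\,z_o>0$ and $|z_o|\ge u_o$. Then $$b_{11}(z_o^* )=0\iff s_{11}(z_o)=0\iff b_{33}\!\left(-\frac{u_o^2}{z_o^*}\right)=0\iff s_{33}\!\left(-\frac{u_o^2}{z_o}\right)=0.$$
   Context: Equation and potential. Let $u_o>0$ and $\alpha_1,\alpha_2\in\mathbb{R}$. Let $\boldsymbol{u}(x,t)=(u_1,u_2)^T$ solve $$i\boldsymbol{u}_t+\alpha_1\left[\boldsymbol{u}_{xx}+2\boldsymbol{u}(\|\boldsymbol{u}\|^2-u_o^2)\right]+i\alpha_2\left[\boldsymbol{u}_{xxx}+3\boldsymbol{u}_x\|\boldsymbol{u}\|^2+3\boldsymbol{u}\boldsymbol{u}^\dagger\boldsymbol{u}_x\right]=0,$$ with $\boldsymbol{u}\to\boldsymbol{u}_\pm=\boldsymbol{u}_oe^{ih_\pm}$ as $x\to\pm\infty$, where $h_\pm\in\mathbb{R}$ and $\|\boldsymbol{u}_o\|=u_o$. Assume $\boldsymbol{u}-\boldsymbol{u}_-\in L^1(-\infty,a)$ and $\boldsymbol{u}-\boldsymbol{u}_+\in L^1(a,\infty)$ for every $a\in\mathbb{R}$. Matrices. Set $$\boldsymbol{U}=\begin{pmatrix}0&-\boldsymbol{u}^\dagger\\ \boldsymbol{u}&0_{2\times2}\end{pmatrix},\qquad \boldsymbol{\sigma}=\mathrm{diag}(1,-1,-1).$$ Uniformization: $k=\frac12\left(z-\frac{u_o^2}{z}\right)$, $\lambda=\frac12\left(z+\frac{u_o^2}{z}\right)$.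 Lax pair: $$\boldsymbol{X}=-ik\boldsymbol{\sigma}+\boldsymbol{U},$$ $$\boldsymbol{T}=\alpha_1\left[2ik^2\boldsymbol{\sigma}-2k\boldsymbol{U}+i\boldsymbol{\sigma}(\boldsymbol{U}^2+u_o^2-\boldsymbol{U}_x)\right]+\alpha_2\left[-4ik^3\boldsymbol{\sigma}+4k^2\boldsymbol{U}+2ik\boldsymbol{\sigma}(\boldsymbol{U}_x-\boldsymbol{U}^2)-\boldsymbol{U}\boldsymbol{U}_x+\boldsymbol{U}_x\boldsymbol{U}-\boldsymbol{U}_{xx}+2\boldsymbol{U}^3\right].$$ Phases: $$h_1=-\lambda x+2\lambda\left[\alpha_1k+\alpha_2(u_o^2-2k^2)\right]t,\qquad h_2=kx-\left[\alpha_1(k^2+\lambda^2)-4\alpha_2k^3\right]t,\qquad \boldsymbol{H}=\mathrm{diag}(h_1,h_2,-h_1).$$ Eigenvector matrices. With $\boldsymbol{v}^\perp=(v_2^*,-v_1^* )^T$, $$\boldsymbol{G}_\pm(z)=\begin{pmatrix} i&0&u_o/z\\ -\boldsymbol{u}_\pm/z&\boldsymbol{u}_\pm^\perp/u_o&-i\boldsymbol{u}_\pm/u_o\end{pmatrix}.$$ Continuous spectrum: $\Sigma=\mathbb{R}\cup\{|z|=u_o\}$. Jost solutions and scattering data. For $z\in\Sigma\setminus\{\pm iu_o\}$, $\boldsymbol{\varphi}_\pm$ are the simultaneous solutions of $\boldsymbol{\varphi}_x=\boldsymbol{X}\boldsymbol{\varphi}$, $\boldsymbol{\varphi}_t=\boldsymbol{T}\boldsymbol{\varphi}$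 with $\boldsymbol{\varphi}_\pm=\boldsymbol{G}_\pm e^{i\boldsymbol{H}}+o(1)$ as $x\to\pm\infty$. The scattering matrix $\boldsymbol{S}=(s_{jl})$ is defined by $\boldsymbol{\varphi}_-=\boldsymbol{\varphi}_+\boldsymbol{S}$, and $\boldsymbol{B}=\boldsymbol{S}^{-1}=(b_{jl})$. Regions: - $\Xi_1=\{|z|>u_o,\ \mathrm{Im}\,z>0\}$, - $\Xi_2=\{|z|>u_o,\ \mathrm{Im}\,z<0\}$, - $\Xi_3=\{|z|<u_o,\ \mathrm{Im}\,z<0\}$, - $\Xi_4=\{|z|<u_o,\ \mathrm{Im}\,z>0\}$. Standing fact used in the setting: $s_{11}$ extends analytically to $\Xi_1$, $b_{11}$ to $\Xi_2$, $b_{33}$ to $\Xi_3$, and $s_{33}$ to $\Xi_4$ (continuous up to $\Sigma$); the functions above denote these extensions. *)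

theory Defs
  imports "HOL-Analysis.Analysis"
begin

type_synonym cvec2 = "complex^2"
type_synonym cmat3 = "complex^3^3"

definition mk3 :: "complex \<Rightarrow> complex \<Rightarrow> complex \<Rightarrow> complex \<Rightarrow> complex \<Rightarrow> complex
    \<Rightarrow> complex \<Rightarrow> complex \<Rightarrow> complex \<Rightarrow> cmat3" where
  "mk3 a11 a12 a13 a21 a22 a23 a31 a32 a33 =
     (\<chi> i j. if i = 1 then (if j = 1 then a11 else if j = 2 then a12 else a13)
             else if i = 2 then (if j = 1 then a21 else if j = 2 then a22 else a23)
             else (if j = 1 then a31 else if j = 2 then a32 else a33))"

definition csm :: "complex \<Rightarrow> cmat3 \<Rightarrow> cmat3" (infixr "\<cdot>\<^sub>m" 75) where
  "c \<cdot>\<^sub>m M = (\<chi> i j. c * M $ i $ j)"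

definition csv :: "complex \<Rightarrow> cvec2 \<Rightarrow> cvec2" where
  "csv c v = (\<chi> i. c * v $ i)"

definition dag :: "cvec2 \<Rightarrow> cvec2 \<Rightarrow> complex" where
  "dag v w = cnj (v $ 1) * w $ 1 + cnj (v $ 2) * w $ 2"

definition perp :: "cvec2 \<Rightarrow> cvec2" where
  "perp v = (\<chi> i. if i = 1 then cnj (v $ 2) else - cnj (v $ 1))"

(* U = [[0, -u^dagger],[u, 0_{2x2}]] *)
definition Umat :: "cvec2 \<Rightarrow> cmat3" where
  "Umat w = mk3 0 (- cnj (w $ 1)) (- cnj (w $ 2)) (w $ 1) 0 0 (w $ 2) 0 0"

definition sigma3 :: cmat3 where
  "sigma3 = mk3 1 0 0 0 (-1) 0 0 0 (-1)"

definition kk :: "real \<Rightarrow> complex \<Rightarrow> complex" where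
  "kk uo z = (z - (complex_of_real uo)^2 / z) / 2"

definition ll :: "real \<Rightarrow> complex \<Rightarrow> complex" where
  "ll uo z = (z + (complex_of_real uo)^2 / z) / 2"

definition Xmat :: "real \<Rightarrow> complex \<Rightarrow> cvec2 \<Rightarrow> cmat3" where
  "Xmat uo z w = (- \<i> * kk uo z) \<cdot>\<^sub>m sigma3 + Umat w"

(* T, given the values w = u, wx = u_x, wxx = u_xx at the point (x,t) *)
definition Tmat :: "real \<Rightarrow> real \<Rightarrow> real \<Rightarrow> complex \<Rightarrow> cvec2 \<Rightarrow> cvec2 \<Rightarrow> cvec2 \<Rightarrow> cmat3" where
  "Tmat a1 a2 uo z w wx wxx =
    (let k = kk uo z; U = Umat w; Ux = Umat wx; Uxx = Umat wxx; s = sigma3;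
         c = complex_of_real uo in
     complex_of_real a1 \<cdot>\<^sub>m
       ((2 * \<i> * k^2) \<cdot>\<^sub>m s - (2 * k) \<cdot>\<^sub>m U
        + \<i> \<cdot>\<^sub>m (s ** (U ** U + mat (c^2) - Ux)))
   + complex_of_real a2 \<cdot>\<^sub>m
       ((- 4 * \<i> * k^3) \<cdot>\<^sub>m s + (4 * k^2) \<cdot>\<^sub>m U
        + (2 * \<i> * k) \<cdot>\<^sub>m (s ** (Ux - U ** U))
        - U ** Ux + Ux ** U - Uxx + 2 \<cdot>\<^sub>m (U ** U ** U)))"

definition h1 :: "real \<Rightarrow> real \<Rightarrow> real \<Rightarrow> complex \<Rightarrow> real \<Rightarrow> real \<Rightarrow> complex" where
  "h1 a1 a2 uo z x t =
    (let k = kk uo z; l = ll uo z in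
     - l * x + 2 * l * (a1 * k + a2 * ((complex_of_real uo)^2 - 2 * k^2)) * t)"

definition h2 :: "real \<Rightarrow> real \<Rightarrow> real \<Rightarrow> complex \<Rightarrow> real \<Rightarrow> real \<Rightarrow> complex" where
  "h2 a1 a2 uo z x t =
    (let k = kk uo z; l = ll uo z in
     k * x - (a1 * (k^2 + l^2) - 4 * a2 * k^3) * t)"

definition expiH :: "real \<Rightarrow> real \<Rightarrow> real \<Rightarrow> complex \<Rightarrow> real \<Rightarrow> real \<Rightarrow> cmat3" where
  "expiH a1 a2 uo z x t =
    mk3 (exp (\<i> * h1 a1 a2 uo z x t)) 0 0
        0 (exp (\<i> * h2 a1 a2 uo z x t)) 0
        0 0 (exp (- \<i> * h1 a1 a2 uo z x t))"

definition Gmat :: "real \<Rightarrow> cvec2 \<Rightarrow> complex \<Rightarrow> cmat3" where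
  "Gmat uo up z =
    (let c = complex_of_real uo; q = perp up in
     mk3 \<i> 0 (c / z)
         (- up $ 1 / z) (q $ 1 / c) (- \<i> * up $ 1 / c)
         (- up $ 2 / z) (q $ 2 / c) (- \<i> * up $ 2 / c))"

(* continuous spectrum (in the z-plane; z = 0 is not a point of the uniformization
   variable's domain, since k and lambda are singular there) and regions *)
definition Sigma_spec :: "real \<Rightarrow> complex set" where
  "Sigma_spec uo = ({z. Im z = 0} \<union> {z. cmod z = uo}) - {0}"

definition Xi1 :: "real \<Rightarrow> complex set" where "Xi1 uo = {z. cmod z > uo \<and> Im z > 0}"
definition Xi2 :: "real \<Rightarrow> complex set" where "Xi2 uo = {z. cmod z > uo \<and> Im z < 0}"
definition Xi3 :: "real \<Rightarrow> complex set" where "Xi3 uo = {z. cmod z < uo \<and> Im z < 0}"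
definition Xi4 :: "real \<Rightarrow> complex set" where "Xi4 uo = {z. cmod z < uo \<and> Im z > 0}"

definition solves_eq ::
  "real \<Rightarrow> real \<Rightarrow> real \<Rightarrow> (real \<Rightarrow> real \<Rightarrow> cvec2) \<Rightarrow> (real \<Rightarrow> real \<Rightarrow> cvec2)
   \<Rightarrow> (real \<Rightarrow> real \<Rightarrow> cvec2) \<Rightarrow> (real \<Rightarrow> real \<Rightarrow> cvec2) \<Rightarrow> (real \<Rightarrow> real \<Rightarrow> cvec2) \<Rightarrow> bool" where
  "solves_eq a1 a2 uo u ux uxx uxxx ut \<longleftrightarrow>
    (\<forall>x t. ((\<lambda>y. u y t) has_vector_derivative ux x t) (at x)
         \<and> ((\<lambda>y. ux y t) has_vector_derivative uxx x t) (at x)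
         \<and> ((\<lambda>y. uxx y t) has_vector_derivative uxxx x t) (at x)
         \<and> ((\<lambda>s. u x s) has_vector_derivative ut x t) (at t)
         \<and> csv \<i> (ut x t)
           + csv (complex_of_real a1)
               (uxx x t + csv (2 * complex_of_real ((norm (u x t))^2 - uo^2)) (u x t))
           + csv (\<i> * complex_of_real a2)
               (uxxx x t + csv (3 * complex_of_real ((norm (u x t))^2)) (ux x t)
                + csv (3 * dag (u x t) (ux x t)) (u x t)) = 0)"

(* phi is a Jost solution: simultaneous solution of the Lax pair with
   phi = G e^{iH} + o(1) as x \<rightarrow> F (F = at_top for +, at_bot for -) *)
definition jost ::
  "real \<Rightarrow> real \<Rightarrow> real \<Rightarrow> (real \<Rightarrow> real \<Rightarrow> cvec2) \<Rightarrow> (real \<Rightarrow> real \<Rightarrow> cvec2)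
   \<Rightarrow> (real \<Rightarrow> real \<Rightarrow> cvec2) \<Rightarrow> cvec2 \<Rightarrow> real filter \<Rightarrow> complex
   \<Rightarrow> (real \<Rightarrow> real \<Rightarrow> cmat3) \<Rightarrow> bool" where
  "jost a1 a2 uo u ux uxx up F z phi \<longleftrightarrow>
    (\<forall>x t. ((\<lambda>y. phi y t) has_vector_derivative (Xmat uo z (u x t) ** phi x t)) (at x)
         \<and> ((\<lambda>s. phi x s) has_vector_derivative
               (Tmat a1 a2 uo z (u x t) (ux x t) (uxx x t) ** phi x t)) (at t))
    \<and> (\<forall>t. ((\<lambda>x. phi x t - Gmat uo up z ** expiH a1 a2 uo z x t) \<longlongrightarrow> 0) F)"

end

theory Submission
  imports Defs "HOL-Complex_Analysis.Conformal_Mappings"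
begin


definition adj :: "cmat3 \<Rightarrow> cmat3" where "adj M = (\<chi> i j. cnj (M $ j $ i))"

lemma comp_deriv:
  fixes f :: "real \<Rightarrow> cmat3"
  assumes "(f has_vector_derivative D) F"
  shows "((\<lambda>x. f x $ i $ j) has_vector_derivative D $ i $ j) F"
proof -
  have "bounded_linear (\<lambda>M::cmat3. M $ i $ j)"
    by (rule bounded_linear_compose[OF bounded_linear_vec_nth bounded_linear_vec_nth])
  from bounded_linear.has_vector_derivative[OF this assms] show ?thesis .
qed

lemma adj_mult_nth: "(adj A ** B) $ i $ j = (\<Sum>k\<in>UNIV. cnj (A $ k $ i) * B $ k $ j)"
  by (simp add: adj_def matrix_matrix_mult_def)

lemma const_lemma:
  fixes \<phi> \<psi> X :: "real \<Rightarrow> cmat3"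
  assumes d\<phi>: "\<And>x. (\<phi> has_vector_derivative (X x ** \<phi> x)) (at x)"
    and d\<psi>: "\<And>x. (\<psi> has_vector_derivative (X x ** \<psi> x)) (at x)"
    and skew: "\<And>x i j. cnj (X x $ i $ j) = - X x $ j $ i"
  shows "\<exists>C. \<forall>x. adj (\<phi> x) ** \<psi> x = C"
proof -
  have "\<exists>c. \<forall>x. (adj (\<phi> x) ** \<psi> x) $ i $ j = c" for i j
  proof -
    let ?g = "\<lambda>x. cnj (\<phi> x $ 1 $ i) * \<psi> x $ 1 $ j + cnj (\<phi> x $ 2 $ i) * \<psi> x $ 2 $ j
               + cnj (\<phi> x $ 3 $ i) * \<psi> x $ 3 $ j"
    have eq: "(adj (\<phi> x) ** \<psi> x) $ i $ j = ?g x" for x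
      by (simp add: adj_mult_nth sum_3)
    have "(?g has_derivative (\<lambda>h. 0)) (at x within UNIV)" for x
    proof -
      note d1 = comp_deriv[OF d\<phi>[of x]] and d2 = comp_deriv[OF d\<psi>[of x]]
      have "(?g has_vector_derivative
         (cnj (\<phi> x $ 1 $ i) * (X x ** \<psi> x) $ 1 $ j + cnj ((X x ** \<phi> x) $ 1 $ i) * \<psi> x $ 1 $ j
        + (cnj (\<phi> x $ 2 $ i) * (X x ** \<psi> x) $ 2 $ j + cnj ((X x ** \<phi> x) $ 2 $ i) * \<psi> x $ 2 $ j)
        + (cnj (\<phi> x $ 3 $ i) * (X x ** \<psi> x) $ 3 $ j + cnj ((X x ** \<phi> x) $ 3 $ i) * \<psi> x $ 3 $ j)))
         (at x)"
        by (intro derivative_intros d1 d2)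
      moreover have "cnj (\<phi> x $ 1 $ i) * (X x ** \<psi> x) $ 1 $ j + cnj ((X x ** \<phi> x) $ 1 $ i) * \<psi> x $ 1 $ j
        + (cnj (\<phi> x $ 2 $ i) * (X x ** \<psi> x) $ 2 $ j + cnj ((X x ** \<phi> x) $ 2 $ i) * \<psi> x $ 2 $ j)
        + (cnj (\<phi> x $ 3 $ i) * (X x ** \<psi> x) $ 3 $ j + cnj ((X x ** \<phi> x) $ 3 $ i) * \<psi> x $ 3 $ j) = 0"
        by (simp add: matrix_matrix_mult_def sum_3 skew algebra_simps)
      ultimately show ?thesis by (simp add: has_vector_derivative_def)
    qed
    from has_derivative_zero_constant[OF convex_UNIV this] eq show ?thesis by auto
  qed
  then obtain c where c: "\<And>i j x. (adj (\<phi> x) ** \<psi> x) $ i $ j = c i j" by metis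
  show ?thesis
    by (rule exI[of _ "\<chi> i j. c i j"]) (simp add: vec_eq_iff c)
qed

lemma bdd_zero:
  fixes a g :: "real \<Rightarrow> complex"
  assumes g: "(g \<longlongrightarrow> 0) F" and a: "\<And>x. cmod (a x) \<le> M"
  shows "((\<lambda>x. a x * g x) \<longlongrightarrow> 0) F"
proof (rule Lim_null_comparison)
  show "\<forall>\<^sub>F x in F. norm (a x * g x) \<le> M * norm (g x)"
    by (intro always_eventually allI) (simp add: norm_mult mult_right_mono a)
  show "((\<lambda>x. M * norm (g x)) \<longlongrightarrow> 0) F"
    using tendsto_mult_right_zero[OF tendsto_norm_zero[OF g]] by simp
qed

lemma term_lim:
  fixes p q a b :: "real \<Rightarrow> complex"
  assumes "((\<lambda>x. p x - a x) \<longlongrightarrow> 0) F" "((\<lambda>x. q x - b x) \<longlongrightarrow> 0) F"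
    "\<And>x. cmod (a x) \<le> M" "\<And>x. cmod (b x) \<le> M"
  shows "((\<lambda>x. cnj (p x) * q x - cnj (a x) * b x) \<longlongrightarrow> 0) F"
proof -
  have e: "((\<lambda>x. cnj (p x - a x)) \<longlongrightarrow> 0) F" using tendsto_cnj[OF assms(1)] by simp
  have 1: "((\<lambda>x. cnj (p x - a x) * (q x - b x)) \<longlongrightarrow> 0) F"
    using tendsto_mult[OF e assms(2)] by simp
  have 2: "((\<lambda>x. cnj (a x) * (q x - b x)) \<longlongrightarrow> 0) F"
    by (rule bdd_zero[OF assms(2), of _ M]) (simp add: assms(3))
  have 3: "((\<lambda>x. b x * cnj (p x - a x)) \<longlongrightarrow> 0) F"
    by (rule bdd_zero[OF e, of _ M]) (simp add: assms(4))
  have "((\<lambda>x. cnj (p x - a x) * (q x - b x) + cnj (a x) * (q x - b x) + b x * cnj (p x - a x)) \<longlongrightarrow> 0) F"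
    using tendsto_add[OF tendsto_add[OF 1 2] 3] by simp
  moreover have "cnj (p x - a x) * (q x - b x) + cnj (a x) * (q x - b x) + b x * cnj (p x - a x)
      = cnj (p x) * q x - cnj (a x) * b x" for x
    by (simp add: algebra_simps)
  ultimately show ?thesis by simp
qed

lemma limit_lemma:
  fixes \<phi> \<psi> A B :: "real \<Rightarrow> cmat3"
  assumes l1: "((\<lambda>x. \<phi> x - A x) \<longlongrightarrow> 0) F" and l2: "((\<lambda>x. \<psi> x - B x) \<longlongrightarrow> 0) F"
    and bA: "\<And>x i j. cmod (A x $ i $ j) \<le> M" and bB: "\<And>x i j. cmod (B x $ i $ j) \<le> M"
    and K: "\<And>x. adj (A x) ** B x = K" and C: "\<And>x. adj (\<phi> x) ** \<psi> x = C"
    and F: "F \<noteq> bot"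
  shows "C = K"
proof -
  have "C $ i $ j = K $ i $ j" for i j
  proof -
    have e: "((\<lambda>x. \<phi> x $ k $ i - A x $ k $ i) \<longlongrightarrow> 0) F" for k i
      using tendsto_vec_nth[OF tendsto_vec_nth[OF l1], of k i] by simp
    have f: "((\<lambda>x. \<psi> x $ k $ j - B x $ k $ j) \<longlongrightarrow> 0) F" for k j
      using tendsto_vec_nth[OF tendsto_vec_nth[OF l2], of k j] by simp
    have t: "((\<lambda>x. cnj (\<phi> x $ k $ i) * \<psi> x $ k $ j - cnj (A x $ k $ i) * B x $ k $ j) \<longlongrightarrow> 0) F" for k
      by (rule term_lim[OF e f, of _ _ M]) (simp_all add: bA bB)
    have "((\<lambda>x. (adj (\<phi> x) ** \<psi> x) $ i $ j - (adj (A x) ** B x) $ i $ j) \<longlongrightarrow> 0) F"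
      using tendsto_add[OF tendsto_add[OF t[of 1] t[of 2]] t[of 3]]
      by (simp add: adj_mult_nth sum_3 algebra_simps)
    then have "((\<lambda>x. C $ i $ j - K $ i $ j) \<longlongrightarrow> 0) F" by (simp add: C K)
    then show ?thesis using F by (simp add: tendsto_const_iff)
  qed
  then show ?thesis by (simp add: vec_eq_iff)
qed


lemma mk3_nth: "mk3 a11 a12 a13 a21 a22 a23 a31 a32 a33 $ i $ j =
   (if i = 1 then (if j = 1 then a11 else if j = 2 then a12 else a13)
             else if i = 2 then (if j = 1 then a21 else if j = 2 then a22 else a23)
             else (if j = 1 then a31 else if j = 2 then a32 else a33))"
  by (simp add: mk3_def)

lemma kk_real: "kk uo (complex_of_real r) = complex_of_real ((r - uo^2 / r) / 2)"
  by (simp add: kk_def)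
lemma ll_real: "ll uo (complex_of_real r) = complex_of_real ((r + uo^2 / r) / 2)"
  by (simp add: ll_def)

lemma h1_real: "h1 a1 a2 uo (complex_of_real r) x t = complex_of_real
   (- ((r + uo^2 / r) / 2) * x + 2 * ((r + uo^2 / r) / 2) * (a1 * ((r - uo^2 / r) / 2) + a2 * (uo^2 - 2 * ((r - uo^2 / r) / 2)^2)) * t)"
  by (simp add: h1_def Let_def kk_real ll_real)

lemma h2_real: "h2 a1 a2 uo (complex_of_real r) x t = complex_of_real
   (((r - uo^2 / r) / 2) * x - (a1 * (((r - uo^2 / r) / 2)^2 + ((r + uo^2 / r) / 2)^2) - 4 * a2 * ((r - uo^2 / r) / 2)^3) * t)"
  by (simp add: h2_def Let_def kk_real ll_real)

lemma skewX:
  assumes "z = complex_of_real r"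
  shows "cnj (Xmat uo z w $ i $ j) = - Xmat uo z w $ j $ i"
  using exhaust_3[of i] exhaust_3[of j] unfolding assms
  by (elim disjE) (simp_all add: Xmat_def csm_def sigma3_def Umat_def mk3_nth kk_real)


definition Dg :: "complex \<Rightarrow> complex \<Rightarrow> cmat3" where "Dg e1 e2 = mk3 e1 0 0 0 e2 0 0 0 (cnj e1)"

lemma adj_mk3: "adj (mk3 a11 a12 a13 a21 a22 a23 a31 a32 a33) =
   mk3 (cnj a11) (cnj a21) (cnj a31) (cnj a12) (cnj a22) (cnj a32) (cnj a13) (cnj a23) (cnj a33)"
  unfolding vec_eq_iff forall_3 by (simp add: adj_def mk3_nth)

lemma mult_mk3: "mk3 a11 a12 a13 a21 a22 a23 a31 a32 a33 ** mk3 b11 b12 b13 b21 b22 b23 b31 b32 b33 =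
   mk3 (a11*b11+a12*b21+a13*b31) (a11*b12+a12*b22+a13*b32) (a11*b13+a12*b23+a13*b33)
       (a21*b11+a22*b21+a23*b31) (a21*b12+a22*b22+a23*b32) (a21*b13+a22*b23+a23*b33)
       (a31*b11+a32*b21+a33*b31) (a31*b12+a32*b22+a33*b32) (a31*b13+a32*b23+a33*b33)"
  unfolding vec_eq_iff forall_3 by (simp add: matrix_matrix_mult_def mk3_nth sum_3)

lemma mk3_eq: "mk3 a11 a12 a13 a21 a22 a23 a31 a32 a33 = mk3 b11 b12 b13 b21 b22 b23 b31 b32 b33 \<longleftrightarrow>
   a11 = b11 \<and> a12 = b12 \<and> a13 = b13 \<and> a21 = b21 \<and> a22 = b22 \<and> a23 = b23 \<and> a31 = b31 \<and> a32 = b32 \<and> a33 = b33"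
  unfolding vec_eq_iff forall_3 by (simp add: mk3_nth)

lemma Gmat_mk3: "Gmat uo up z = mk3 \<i> 0 (complex_of_real uo / z)
         (- up $ 1 / z) (cnj (up $ 2) / complex_of_real uo) (- \<i> * up $ 1 / complex_of_real uo)
         (- up $ 2 / z) (- cnj (up $ 1) / complex_of_real uo) (- \<i> * up $ 2 / complex_of_real uo)"
  by (simp add: Gmat_def Let_def perp_def)

lemma AdjD:
  fixes up :: cvec2
  assumes n: "cnj (up $ 1) * up $ 1 + cnj (up $ 2) * up $ 2 = (complex_of_real uo)^2"
    and uo: "uo > 0" and r: "r \<noteq> 0"
    and e1: "cnj e1 * e1 = 1" and e2: "cnj e2 * e2 = 1"
  shows "adj (Gmat uo up (complex_of_real r) ** Dg e1 e2) ** (Gmat uo up (complex_of_real r) ** Dg e1 e2)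
     = mk3 (1 + (complex_of_real uo)^2 / (complex_of_real r)^2) 0 0 0 1 0 0 0 (1 + (complex_of_real uo)^2 / (complex_of_real r)^2)"
proof -
  have e1': "e1 * cnj e1 = 1" using e1 by (simp add: mult.commute)
  have e2': "e2 * cnj e2 = 1" using e2 by (simp add: mult.commute)
  have n': "up $ 1 * cnj (up $ 1) + up $ 2 * cnj (up $ 2) = (complex_of_real uo)^2" using n by (simp add: mult.commute)
  have uo0: "complex_of_real uo \<noteq> 0" using uo by simp
  have n2: "up $ 2 * cnj (up $ 2) = (complex_of_real uo)^2 - up $ 1 * cnj (up $ 1)" using n' by (simp add: algebra_simps)
  have r0: "complex_of_real r \<noteq> 0" using r by simp
  have uo_ne: "uo \<noteq> 0" using uo by simp
  show ?thesis
    unfolding Gmat_mk3 Dg_def mult_mk3 adj_mk3 mk3_eq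
    using n' e1' e2' apply (simp add: field_simps power2_eq_square r uo_ne)
    apply (intro conjI)
    apply algebra
    apply algebra
    apply algebra
    apply algebra
    apply algebra
    done
qed

lemma AdjK:
  fixes up :: cvec2
  assumes n: "cnj (up $ 1) * up $ 1 + cnj (up $ 2) * up $ 2 = (complex_of_real uo)^2"
    and uo: "uo > 0" and r: "r \<noteq> 0"
    and e1: "cnj e1 * e1 = 1" and e2: "cnj e2 * e2 = 1"
  shows "adj (Gmat uo up (complex_of_real r) ** Dg e1 e2) ** (Gmat uo up (complex_of_real (- (uo ^ 2) / r)) ** Dg (cnj e1) e2)
     = mk3 0 0 ((1 + (complex_of_real uo)^2 / (complex_of_real r)^2) * (\<i> * complex_of_real r / complex_of_real uo)) 0 1 0
           ((1 + (complex_of_real uo)^2 / (complex_of_real r)^2) * (\<i> * complex_of_real r / complex_of_real uo)) 0 0"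
proof -
  have e1': "e1 * cnj e1 = 1" using e1 by (simp add: mult.commute)
  have e2': "e2 * cnj e2 = 1" using e2 by (simp add: mult.commute)
  have n': "up $ 1 * cnj (up $ 1) + up $ 2 * cnj (up $ 2) = (complex_of_real uo)^2" using n by (simp add: mult.commute)
  have uo_ne: "uo \<noteq> 0" using uo by simp
  show ?thesis
    unfolding Gmat_mk3 Dg_def mult_mk3 adj_mk3 mk3_eq
    using n' e1' e2' apply (simp add: field_simps power2_eq_square r uo_ne)
    apply (intro conjI)
    apply algebra+
    done
qed

lemma expiH_real: "expiH a1 a2 uo (complex_of_real r) x t =
   Dg (exp (\<i> * h1 a1 a2 uo (complex_of_real r) x t)) (exp (\<i> * h2 a1 a2 uo (complex_of_real r) x t))"
  by (simp add: expiH_def Dg_def h1_real exp_cnj)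

lemma exp_unit: "cnj (exp (\<i> * complex_of_real y)) * exp (\<i> * complex_of_real y) = 1"
  by (simp add: exp_cnj exp_add[symmetric])

lemma kl_tilde:
  assumes "r \<noteq> 0" "uo \<noteq> 0"
  shows "kk uo (complex_of_real (- (uo ^ 2) / r)) = kk uo (complex_of_real r)"
    "ll uo (complex_of_real (- (uo ^ 2) / r)) = - ll uo (complex_of_real r)"
  unfolding kk_real ll_real using assms by (simp_all add: field_simps power2_eq_square)

lemma h_tilde:
  assumes "r \<noteq> 0" "uo \<noteq> 0"
  shows "h1 a1 a2 uo (complex_of_real (- (uo ^ 2) / r)) x t = - h1 a1 a2 uo (complex_of_real r) x t"
    "h2 a1 a2 uo (complex_of_real (- (uo ^ 2) / r)) x t = h2 a1 a2 uo (complex_of_real r) x t"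
  unfolding h1_def h2_def Let_def kl_tilde[OF assms] by (simp_all add: algebra_simps)



lemma bound_GD:
  assumes "cmod e1 = 1" "cmod e2 = 1"
  shows "cmod ((G ** Dg e1 e2) $ i $ j) \<le> (\<Sum>i\<in>UNIV. \<Sum>j\<in>UNIV. cmod (G $ i $ j))"
proof -
  have eq: "(G ** Dg e1 e2) $ i $ j = G $ i $ j * Dg e1 e2 $ j $ j"
    using exhaust_3[of j] by (elim disjE) (simp_all add: matrix_matrix_mult_def sum_3 Dg_def mk3_nth)
  have n1: "cmod (Dg e1 e2 $ j $ j) = 1"
    using exhaust_3[of j] assms by (elim disjE) (simp_all add: Dg_def mk3_nth)
  have "cmod ((G ** Dg e1 e2) $ i $ j) = cmod (G $ i $ j)" by (simp add: eq norm_mult n1)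
  also have "\<dots> \<le> (\<Sum>j\<in>UNIV. cmod (G $ i $ j))" by (rule member_le_sum) auto
  also have "\<dots> \<le> (\<Sum>i\<in>UNIV. \<Sum>j\<in>UNIV. cmod (G $ i $ j))"
    by (rule member_le_sum[where f="\<lambda>i. \<Sum>j\<in>UNIV. cmod (G $ i $ j)"]) (auto intro: sum_nonneg)
  finally show ?thesis .
qed

lemma sum_nonneg_G: "0 \<le> (\<Sum>i\<in>UNIV. \<Sum>j\<in>UNIV. cmod ((G::cmat3) $ i $ j))"
  by (intro sum_nonneg norm_ge_zero)

lemma exp_h1_unit: "cmod (exp (\<i> * h1 a1 a2 uo (complex_of_real r) x t)) = 1"
  unfolding h1_real by (rule norm_exp_i_times)
lemma exp_h2_unit: "cmod (exp (\<i> * h2 a1 a2 uo (complex_of_real r) x t)) = 1"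
  unfolding h2_real by (rule norm_exp_i_times)
lemma exp_neg_gen: "exp (\<i> * - complex_of_real y) = cnj (exp (\<i> * complex_of_real y))"
  by (simp add: exp_cnj)
lemma exp_h1_cnj_unit: "cnj (exp (\<i> * h1 a1 a2 uo (complex_of_real r) x t)) * exp (\<i> * h1 a1 a2 uo (complex_of_real r) x t) = 1"
  unfolding h1_real by (rule exp_unit)
lemma exp_h2_cnj_unit: "cnj (exp (\<i> * h2 a1 a2 uo (complex_of_real r) x t)) * exp (\<i> * h2 a1 a2 uo (complex_of_real r) x t) = 1"
  unfolding h2_real by (rule exp_unit)
lemma exp_h1_neg: "exp (\<i> * - h1 a1 a2 uo (complex_of_real r) x t) = cnj (exp (\<i> * h1 a1 a2 uo (complex_of_real r) x t))"
  unfolding h1_real by (rule exp_neg_gen)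

lemma jost_pair:
  fixes \<phi> \<psi> :: "real \<Rightarrow> real \<Rightarrow> cmat3" and up :: cvec2
  assumes uo: "uo > 0" and r: "r \<noteq> 0"
    and n: "cnj (up $ 1) * up $ 1 + cnj (up $ 2) * up $ 2 = (complex_of_real uo)^2"
    and j1: "jost a1 a2 uo u ux uxx up F (complex_of_real r) \<phi>"
    and j2: "jost a1 a2 uo u ux uxx up F (complex_of_real (- (uo ^ 2) / r)) \<psi>"
    and F: "F \<noteq> bot"
  shows "adj (\<phi> x 0) ** \<phi> x 0 = mk3 (1 + (complex_of_real uo)^2 / (complex_of_real r)^2) 0 0 0 1 0 0 0 (1 + (complex_of_real uo)^2 / (complex_of_real r)^2)"
    and "adj (\<phi> x 0) ** \<psi> x 0 = mk3 0 0 ((1 + (complex_of_real uo)^2 / (complex_of_real r)^2) * (\<i> * complex_of_real r / complex_of_real uo)) 0 1 0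
           ((1 + (complex_of_real uo)^2 / (complex_of_real r)^2) * (\<i> * complex_of_real r / complex_of_real uo)) 0 0"
proof -
  have uo0: "uo \<noteq> 0" using uo by simp
  define z where "z = complex_of_real r"
  define zt where "zt = complex_of_real (- (uo ^ 2) / r)"
  define X where "X = (\<lambda>x. Xmat uo z (u x 0))"
  have Xeq: "Xmat uo zt w = Xmat uo z w" for w
    unfolding Xmat_def z_def zt_def kl_tilde[OF r uo0] ..
  have d1: "((\<lambda>y. \<phi> y 0) has_vector_derivative (X x ** \<phi> x 0)) (at x)" for x
    using j1 unfolding jost_def X_def z_def by blast
  have d2: "((\<lambda>y. \<psi> y 0) has_vector_derivative (X x ** \<psi> x 0)) (at x)" for x
    using j2 unfolding jost_def X_def Xeq[unfolded zt_def z_def] z_def by blast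
  have sk: "cnj (X x $ i $ j) = - X x $ j $ i" for x i j
    unfolding X_def z_def by (rule skewX) simp
  obtain C1 where C1: "\<And>x. adj (\<phi> x 0) ** \<phi> x 0 = C1"
    using const_lemma[of "\<lambda>y. \<phi> y 0" X "\<lambda>y. \<phi> y 0", OF d1 d1 sk] by blast
  obtain C2 where C2: "\<And>x. adj (\<phi> x 0) ** \<psi> x 0 = C2"
    using const_lemma[of "\<lambda>y. \<phi> y 0" X "\<lambda>y. \<psi> y 0", OF d1 d2 sk] by blast
  define E1 where "E1 = (\<lambda>x. exp (\<i> * h1 a1 a2 uo z x 0))"
  define E2 where "E2 = (\<lambda>x. exp (\<i> * h2 a1 a2 uo z x 0))"
  define A where "A = (\<lambda>x. Gmat uo up z ** Dg (E1 x) (E2 x))"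
  define B where "B = (\<lambda>x. Gmat uo up zt ** Dg (cnj (E1 x)) (E2 x))"
  have Aeq: "Gmat uo up z ** expiH a1 a2 uo z x 0 = A x" for x
    unfolding A_def E1_def E2_def z_def expiH_real ..
  have Beq: "Gmat uo up zt ** expiH a1 a2 uo zt x 0 = B x" for x
    unfolding B_def E1_def E2_def zt_def z_def expiH_real h_tilde[OF r uo0] exp_h1_neg ..
  have l1: "((\<lambda>x. \<phi> x 0 - A x) \<longlongrightarrow> 0) F"
  proof -
    have "((\<lambda>x. \<phi> x 0 - Gmat uo up z ** expiH a1 a2 uo z x 0) \<longlongrightarrow> 0) F"
      using j1 unfolding jost_def z_def[symmetric] by blast
    then show ?thesis by (simp only: Aeq)
  qed
  have l2: "((\<lambda>x. \<psi> x 0 - B x) \<longlongrightarrow> 0) F"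
  proof -
    have "((\<lambda>x. \<psi> x 0 - Gmat uo up zt ** expiH a1 a2 uo zt x 0) \<longlongrightarrow> 0) F"
      using j2 unfolding jost_def zt_def[symmetric] by blast
    then show ?thesis by (simp only: Beq)
  qed
  define M where "M = (\<Sum>i\<in>UNIV. \<Sum>j\<in>UNIV. cmod (Gmat uo up z $ i $ j)) + (\<Sum>i\<in>UNIV. \<Sum>j\<in>UNIV. cmod (Gmat uo up zt $ i $ j))"
  have bA: "cmod (A x $ i $ j) \<le> M" for x i j
  proof -
    have "cmod (A x $ i $ j) \<le> (\<Sum>i\<in>UNIV. \<Sum>j\<in>UNIV. cmod (Gmat uo up z $ i $ j))"
      unfolding A_def E1_def E2_def z_def by (rule bound_GD) (simp_all only: complex_mod_cnj exp_h1_unit exp_h2_unit)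
    then show ?thesis unfolding M_def using sum_nonneg_G[of "Gmat uo up zt"] by linarith
  qed
  have bB: "cmod (B x $ i $ j) \<le> M" for x i j
  proof -
    have "cmod (B x $ i $ j) \<le> (\<Sum>i\<in>UNIV. \<Sum>j\<in>UNIV. cmod (Gmat uo up zt $ i $ j))"
      unfolding B_def E1_def E2_def z_def by (rule bound_GD) (simp_all only: complex_mod_cnj exp_h1_unit exp_h2_unit)
    then show ?thesis unfolding M_def using sum_nonneg_G[of "Gmat uo up z"] by linarith
  qed
  have KA: "adj (A x) ** A x = mk3 (1 + (complex_of_real uo)^2 / (complex_of_real r)^2) 0 0 0 1 0 0 0 (1 + (complex_of_real uo)^2 / (complex_of_real r)^2)" for x
    unfolding A_def z_def E1_def E2_def
    by (rule AdjD[OF n uo r]) (simp_all add: exp_h1_cnj_unit exp_h2_cnj_unit)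
  have KB: "adj (A x) ** B x = mk3 0 0 ((1 + (complex_of_real uo)^2 / (complex_of_real r)^2) * (\<i> * complex_of_real r / complex_of_real uo)) 0 1 0
           ((1 + (complex_of_real uo)^2 / (complex_of_real r)^2) * (\<i> * complex_of_real r / complex_of_real uo)) 0 0" for x
    unfolding A_def B_def z_def zt_def E1_def E2_def
    by (rule AdjK[OF n uo r]) (simp_all add: exp_h1_cnj_unit exp_h2_cnj_unit)
  show "adj (\<phi> x 0) ** \<phi> x 0 = mk3 (1 + (complex_of_real uo)^2 / (complex_of_real r)^2) 0 0 0 1 0 0 0 (1 + (complex_of_real uo)^2 / (complex_of_real r)^2)"
    using limit_lemma[OF l1 l1 bA bA KA C1 F] C1 by simp
  show "adj (\<phi> x 0) ** \<psi> x 0 = mk3 0 0 ((1 + (complex_of_real uo)^2 / (complex_of_real r)^2) * (\<i> * complex_of_real r / complex_of_real uo)) 0 1 0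
           ((1 + (complex_of_real uo)^2 / (complex_of_real r)^2) * (\<i> * complex_of_real r / complex_of_real uo)) 0 0"
    using limit_lemma[OF l1 l2 bA bB KB C2 F] C2 by simp
qed



lemma mk3_self: "(M::cmat3) = mk3 (M$1$1) (M$1$2) (M$1$3) (M$2$1) (M$2$2) (M$2$3) (M$3$1) (M$3$2) (M$3$3)"
  unfolding vec_eq_iff forall_3 by (simp add: mk3_nth)

lemma mat1_mk3: "(mat 1 :: cmat3) = mk3 1 0 0 0 1 0 0 0 1"
  unfolding vec_eq_iff forall_3 by (simp add: mk3_nth mat_def)

lemma inv_unique:
  fixes S T :: cmat3
  assumes "S ** T = mat 1" "T ** S = mat 1"
  shows "matrix_inv S = T"
proof -
  have ex: "\<exists>A'. S ** A' = mat 1 \<and> A' ** S = mat 1" using assms by blast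
  show ?thesis unfolding matrix_inv_def
  proof (rule someI2_ex[OF ex])
    fix A' assume "S ** A' = mat 1 \<and> A' ** S = mat 1"
    then have "A' = (A' ** S) ** T" using assms by (metis matrix_mul_assoc matrix_mul_rid)
    then show "A' = T" using \<open>S ** A' = mat 1 \<and> A' ** S = mat 1\<close> by (simp add: matrix_mul_lid)
  qed
qed

lemma ALG:
  fixes S St :: cmat3
  assumes d: "d \<noteq> 0" and a: "a \<noteq> 0"
    and h1: "adj S ** mk3 d 0 0 0 1 0 0 0 d ** S = mk3 d 0 0 0 1 0 0 0 d"
    and h2: "adj S ** mk3 0 0 (d*a) 0 1 0 (d*a) 0 0 ** St = mk3 0 0 (d*a) 0 1 0 (d*a) 0 0"
  shows "matrix_inv S $ 1 $ 1 = cnj (S $ 1 $ 1)" "matrix_inv S $ 3 $ 3 = cnj (S $ 3 $ 3)"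
    "St $ 3 $ 3 = S $ 1 $ 1"
proof -
  define D where "D = mk3 d 0 0 0 1 0 0 0 d"
  define Di where "Di = mk3 (1/d) 0 0 0 1 0 0 0 (1/d)"
  define P where "P = mk3 0 0 a 0 1 0 a 0 0"
  define K where "K = mk3 0 0 (d*a) 0 1 0 (d*a) 0 0"
  have DiD: "Di ** D = mat 1" "D ** Di = mat 1"
    unfolding D_def Di_def mult_mk3 mat1_mk3 using d by simp_all
  have DiK: "Di ** K = P" unfolding Di_def K_def P_def mult_mk3 using d by simp
  define T where "T = Di ** adj S ** D"
  have TS: "T ** S = mat 1"
    unfolding T_def using h1[folded D_def] DiD by (metis matrix_mul_assoc)
  then have ST: "S ** T = mat 1" by (simp add: matrix_left_right_inverse)
  have inv: "matrix_inv S = T" by (rule inv_unique[OF ST TS])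
  have T11: "T $ 1 $ 1 = cnj (S $ 1 $ 1)" "T $ 3 $ 3 = cnj (S $ 3 $ 3)"
    unfolding T_def Di_def D_def
    by (subst (1 2) mk3_self[of S], unfold adj_mk3 mult_mk3, simp add: mk3_nth d)+
  show "matrix_inv S $ 1 $ 1 = cnj (S $ 1 $ 1)" "matrix_inv S $ 3 $ 3 = cnj (S $ 3 $ 3)"
    using T11 inv by simp_all
  have SDiadj: "S ** Di ** adj S = Di"
  proof -
    have "S ** Di ** adj S = (S ** T) ** Di" unfolding T_def using DiD
      by (metis matrix_mul_assoc matrix_mul_rid)
    then show ?thesis using ST by (simp add: matrix_mul_lid)
  qed
  have "S ** P = P ** St"
  proof -
    have "S ** P = S ** Di ** (adj S ** K ** St)" using h2[folded K_def] DiK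
      by (metis matrix_mul_assoc)
    also have "\<dots> = (S ** Di ** adj S) ** K ** St" by (metis matrix_mul_assoc)
    also have "\<dots> = P ** St" using SDiadj DiK by (metis matrix_mul_assoc)
    finally show ?thesis .
  qed
  then have "(S ** P) $ 1 $ 3 = (P ** St) $ 1 $ 3" by simp
  then have "S $ 1 $ 1 * a = a * St $ 3 $ 3"
    unfolding P_def by (simp add: matrix_matrix_mult_def sum_3 mk3_nth)
  then show "St $ 3 $ 3 = S $ 1 $ 1" using a by (simp add: mult.commute)
qed



lemma adj_mult: "adj (A ** B) = adj B ** adj A"
  by (simp add: vec_eq_iff adj_def matrix_matrix_mult_def mult.commute)

lemma real_in_spec:
  assumes "r \<noteq> 0" "uo \<noteq> 0"
  shows "complex_of_real r \<in> Sigma_spec uo - {\<i> * complex_of_real uo, - \<i> * complex_of_real uo}"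
  using assms by (auto simp: Sigma_spec_def complex_eq_iff)

lemma per_r:
  fixes phim phip :: "complex \<Rightarrow> real \<Rightarrow> real \<Rightarrow> cmat3" and S :: "complex \<Rightarrow> cmat3"
    and um upl :: cvec2
  assumes uo: "uo > 0" and r: "r \<noteq> 0"
    and nm: "cnj (um $ 1) * um $ 1 + cnj (um $ 2) * um $ 2 = (complex_of_real uo)^2"
    and np: "cnj (upl $ 1) * upl $ 1 + cnj (upl $ 2) * upl $ 2 = (complex_of_real uo)^2"
    and jost_m: "\<forall>z \<in> Sigma_spec uo - {\<i> * uo, - \<i> * uo}.
                   jost a1 a2 uo u ux uxx um at_bot z (phim z)"
    and jost_p: "\<forall>z \<in> Sigma_spec uo - {\<i> * uo, - \<i> * uo}.
                   jost a1 a2 uo u ux uxx upl at_top z (phip z)"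
    and scat: "\<forall>z \<in> Sigma_spec uo - {\<i> * uo, - \<i> * uo}. \<forall>x t.
                   phim z x t = phip z x t ** S z"
  shows "matrix_inv (S (complex_of_real r)) $ 1 $ 1 = cnj (S (complex_of_real r) $ 1 $ 1)"
    "matrix_inv (S (complex_of_real r)) $ 3 $ 3 = cnj (S (complex_of_real r) $ 3 $ 3)"
    "S (complex_of_real (- (uo ^ 2) / r)) $ 3 $ 3 = S (complex_of_real r) $ 1 $ 1"
proof -
  have uo0: "uo \<noteq> 0" using uo by simp
  have rt: "- (uo ^ 2) / r \<noteq> 0" using uo0 r by simp
  define z where "z = complex_of_real r"
  define zt where "zt = complex_of_real (- (uo ^ 2) / r)"
  have zs: "z \<in> Sigma_spec uo - {\<i> * uo, - \<i> * uo}" unfolding z_def by (rule real_in_spec[OF r uo0])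
  have zts: "zt \<in> Sigma_spec uo - {\<i> * uo, - \<i> * uo}" unfolding zt_def by (rule real_in_spec[OF rt uo0])
  define d where "d = 1 + (complex_of_real uo)^2 / (complex_of_real r)^2"
  define a where "a = \<i> * complex_of_real r / complex_of_real uo"
  have d0: "d \<noteq> 0"
  proof -
    have "d = complex_of_real (1 + uo^2 / r^2)" unfolding d_def by simp
    moreover have "1 + uo^2 / r^2 > 0" by (simp add: add_pos_nonneg)
    ultimately show ?thesis by (metis of_real_eq_0_iff less_irrefl)
  qed
  have a0: "a \<noteq> 0" unfolding a_def using r uo0 by simp
  have jm: "jost a1 a2 uo u ux uxx um at_bot (complex_of_real r) (phim z)"
           "jost a1 a2 uo u ux uxx um at_bot (complex_of_real (- (uo ^ 2) / r)) (phim zt)"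
    using jost_m zs zts unfolding z_def zt_def by auto
  have jp: "jost a1 a2 uo u ux uxx upl at_top (complex_of_real r) (phip z)"
           "jost a1 a2 uo u ux uxx upl at_top (complex_of_real (- (uo ^ 2) / r)) (phip zt)"
    using jost_p zs zts unfolding z_def zt_def by auto
  note m1 = jost_pair(1)[OF uo r nm jm(1) jm(2) trivial_limit_at_bot_linorder, of 0, folded d_def a_def]
  note m2 = jost_pair(2)[OF uo r nm jm(1) jm(2) trivial_limit_at_bot_linorder, of 0, folded d_def a_def]
  note p1 = jost_pair(1)[OF uo r np jp(1) jp(2) trivial_limit_at_top_linorder, of 0, folded d_def a_def]
  note p2 = jost_pair(2)[OF uo r np jp(1) jp(2) trivial_limit_at_top_linorder, of 0, folded d_def a_def]
  have sm: "phim z 0 0 = phip z 0 0 ** S z" "phim zt 0 0 = phip zt 0 0 ** S zt"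
    using scat zs zts by auto
  have h1: "adj (S z) ** mk3 d 0 0 0 1 0 0 0 d ** S z = mk3 d 0 0 0 1 0 0 0 d"
  proof -
    have "adj (phim z 0 0) ** phim z 0 0 = adj (S z) ** (adj (phip z 0 0) ** phip z 0 0) ** S z"
      unfolding sm adj_mult by (metis matrix_mul_assoc)
    then show ?thesis using m1 p1 by simp
  qed
  have h2: "adj (S z) ** mk3 0 0 (d*a) 0 1 0 (d*a) 0 0 ** S zt = mk3 0 0 (d*a) 0 1 0 (d*a) 0 0"
  proof -
    have "adj (phim z 0 0) ** phim zt 0 0 = adj (S z) ** (adj (phip z 0 0) ** phip zt 0 0) ** S zt"
      unfolding sm adj_mult by (metis matrix_mul_assoc)
    then show ?thesis using m2 p2 by simp
  qed
  note res = ALG[OF d0 a0 h1 h2]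
  show "matrix_inv (S (complex_of_real r)) $ 1 $ 1 = cnj (S (complex_of_real r) $ 1 $ 1)"
    "matrix_inv (S (complex_of_real r)) $ 3 $ 3 = cnj (S (complex_of_real r) $ 3 $ 3)"
    "S (complex_of_real (- (uo ^ 2) / r)) $ 3 $ 3 = S (complex_of_real r) $ 1 $ 1"
    using res unfolding z_def zt_def by simp_all
qed



lemma closure_Xi1_sup:
  assumes "0 \<le> Im z" "uo \<le> cmod z"
  shows "z \<in> closure (Xi1 uo)"
  unfolding closure_approachable
proof (intro allI impI)
  fix e :: real assume e: "e > 0"
  define y where "y = z + \<i> * complex_of_real (e/2)"
  have Im: "Im y = Im z + e/2" by (simp add: y_def)
  have Re: "Re y = Re z" by (simp add: y_def)
  have "(cmod z)^2 < (cmod y)^2"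
  proof -
    have "0 \<le> e * Im z" using assms e by simp
    moreover have "0 < e * e" using e by simp
    ultimately show ?thesis unfolding cmod_power2 Im Re by (simp add: power2_eq_square algebra_simps)
  qed
  then have "cmod z < cmod y" by (rule power2_less_imp_less) simp
  then have "y \<in> Xi1 uo" unfolding Xi1_def using assms e Im by simp
  moreover have "dist y z < e" using e by (simp add: y_def dist_norm norm_mult)
  ultimately show "\<exists>y\<in>Xi1 uo. dist y z < e" by blast
qed

lemma closure_Xi1_sub: "closure (Xi1 uo) \<subseteq> {z. uo \<le> cmod z \<and> 0 \<le> Im z}"
proof (rule closure_minimal)
  show "Xi1 uo \<subseteq> {z. uo \<le> cmod z \<and> 0 \<le> Im z}" by (auto simp: Xi1_def)
  show "closed {z. uo \<le> cmod z \<and> 0 \<le> Im z}"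
    by (intro closed_Collect_conj closed_Collect_le continuous_intros)
qed

lemma open_Xi1: "open (Xi1 uo)"
  unfolding Xi1_def by (intro open_Collect_conj open_Collect_less continuous_intros)

lemma connected_Xi1: assumes uo: "uo \<ge> 0" shows "connected (Xi1 uo)"
proof -
  have eq: "Xi1 uo = (\<lambda>p. complex_of_real (fst p) * exp (\<i> * complex_of_real (snd p))) ` ({uo<..} \<times> {0<..<pi})"
  proof
    show "Xi1 uo \<subseteq> (\<lambda>p. complex_of_real (fst p) * exp (\<i> * complex_of_real (snd p))) ` ({uo<..} \<times> {0<..<pi})"
    proof
      fix z assume z: "z \<in> Xi1 uo"
      have "z = complex_of_real (cmod z) * exp (\<i> * complex_of_real (Arg z))"
        using rcis_cmod_Arg[of z] by (simp add: rcis_def cis_conv_exp)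
      moreover have "0 < Arg z \<and> Arg z < pi" using z Arg_lt_pi[of z] by (simp add: Xi1_def)
      moreover have "cmod z > uo" using z by (simp add: Xi1_def)
      ultimately show "z \<in> (\<lambda>p. complex_of_real (fst p) * exp (\<i> * complex_of_real (snd p))) ` ({uo<..} \<times> {0<..<pi})"
        by (intro image_eqI[of _ _ "(cmod z, Arg z)"]) auto
    qed
    show "(\<lambda>p. complex_of_real (fst p) * exp (\<i> * complex_of_real (snd p))) ` ({uo<..} \<times> {0<..<pi}) \<subseteq> Xi1 uo"
    proof (rule image_subsetI)
      fix p assume "p \<in> {uo<..} \<times> {0<..<pi}"
      then obtain a b where p: "p = (a, b)" and a: "a \<in> {uo<..}" and b: "b \<in> {0<..<pi}" by auto
      have a0: "a > 0" using a uo by simp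
      have "cmod (complex_of_real a * exp (\<i> * complex_of_real b)) = \<bar>a\<bar>"
        by (simp add: norm_mult norm_exp_i_times)
      moreover have "Im (complex_of_real a * exp (\<i> * complex_of_real b)) = a * sin b"
        by (simp add: Im_exp)
      moreover have "sin b > 0" using b by (simp add: sin_gt_zero)
      ultimately show "complex_of_real (fst p) * exp (\<i> * complex_of_real (snd p)) \<in> Xi1 uo"
        using a b a0 unfolding Xi1_def p by simp
    qed
  qed
  show ?thesis unfolding eq
    by (intro connected_continuous_image continuous_intros convex_connected convex_Times convex_real_interval)
qed


lemma ana:
  assumes uo: "uo > 0" and hol: "F holomorphic_on Xi1 uo"
    and cont: "continuous_on (closure (Xi1 uo) - {0}) F"
    and zero: "\<And>x. x > uo \<Longrightarrow> F (complex_of_real x) = 0"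
    and z: "z \<in> closure (Xi1 uo)"
  shows "F z = 0"
proof -
  have "0 \<notin> closure (Xi1 uo)" using closure_Xi1_sub[of uo] uo by auto
  then have cont': "continuous_on (closure (Xi1 uo)) F" using cont by simp
  define r0 where "r0 = complex_of_real (uo + 1)"
  define B where "B = ball r0 (1/2)"
  have Bbig: "cmod w > uo" if "w \<in> B" for w
  proof -
    have "cmod r0 \<le> cmod w + cmod (r0 - w)" by (rule norm_triangle_sub)
    moreover have "cmod (r0 - w) < 1/2" using that by (simp add: B_def dist_norm)
    moreover have "cmod r0 = uo + 1" using uo by (simp add: r0_def)
    ultimately show ?thesis by linarith
  qed
  define g where "g = (\<lambda>w. if 0 \<le> Im w then F w else 0)"
  have set1: "B \<inter> {w. (- \<i>) \<bullet> w < 0} = B \<inter> {w. Im w > 0}" by (auto simp: inner_complex_def)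
  have set2: "B \<inter> {w. 0 < (- \<i>) \<bullet> w} = B \<inter> {w. Im w < 0}" by (auto simp: inner_complex_def)
  have sub1: "B \<inter> {w. Im w > 0} \<subseteq> Xi1 uo" using Bbig by (auto simp: Xi1_def)
  have hg1: "g holomorphic_on (B \<inter> {w. (- \<i>) \<bullet> w < 0})"
    unfolding set1
    by (rule holomorphic_transform[OF holomorphic_on_subset[OF hol sub1]]) (simp add: g_def)
  have hg2: "g holomorphic_on (B \<inter> {w. 0 < (- \<i>) \<bullet> w})"
    unfolding set2
    by (rule holomorphic_transform[OF holomorphic_on_const[of 0]]) (simp add: g_def)
  have cg: "continuous_on B g"
  proof -
    have eqB: "B = (B \<inter> {w. 0 \<le> Im w}) \<union> (B \<inter> {w. Im w \<le> 0})" by auto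
    have c1: "continuous_on (B \<inter> {w. 0 \<le> Im w}) F"
      by (rule continuous_on_subset[OF cont']) (auto intro!: closure_Xi1_sup intro: less_imp_le Bbig)
    have "continuous_on ((B \<inter> {w. 0 \<le> Im w}) \<union> (B \<inter> {w. Im w \<le> 0})) (\<lambda>w. if 0 \<le> Im w then F w else 0)"
    proof (rule continuous_on_cases_local)
      show "closedin (top_of_set (B \<inter> {w. 0 \<le> Im w} \<union> B \<inter> {w. Im w \<le> 0})) (B \<inter> {w. 0 \<le> Im w})"
        unfolding eqB[symmetric] by (rule closedin_closed_Int, rule closed_halfspace_Im_ge)
      show "closedin (top_of_set (B \<inter> {w. 0 \<le> Im w} \<union> B \<inter> {w. Im w \<le> 0})) (B \<inter> {w. Im w \<le> 0})"
        unfolding eqB[symmetric] by (rule closedin_closed_Int, rule closed_halfspace_Im_le)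
      show "continuous_on (B \<inter> {w. 0 \<le> Im w}) F" by (rule c1)
      show "continuous_on (B \<inter> {w. Im w \<le> 0}) (\<lambda>w. 0)" by simp
      fix x assume "x \<in> B \<inter> {w. 0 \<le> Im w} \<and> \<not> 0 \<le> Im x \<or> x \<in> B \<inter> {w. Im w \<le> 0} \<and> 0 \<le> Im x"
      then have x: "x \<in> B" "Im x = 0" by auto
      then have "x = complex_of_real (Re x)" by (simp add: complex_eq_iff)
      moreover have "Re x > uo"
      proof -
        have "cmod (r0 - x) < 1/2" using x by (simp add: B_def dist_norm)
        then have "\<bar>uo + 1 - Re x\<bar> < 1/2"
          using abs_Re_le_cmod[of "r0 - x"] by (simp add: r0_def)
        then show ?thesis by linarith
      qed
      ultimately show "F x = 0" using zero by metis
    qed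
    then show ?thesis unfolding g_def using eqB by simp
  qed
  have hg: "g holomorphic_on B"
  proof -
    have oB: "open B" unfolding B_def by simp
    have "- \<i> \<noteq> (0::complex)" by simp
    from holomorphic_on_paste_across_line[OF oB this hg1 hg2 cg] show ?thesis .
  qed
  have g0: "g w = 0" if "w \<in> B" for w
  proof (rule analytic_continuation_open[of "B \<inter> {w. Im w < 0}" B g "\<lambda>_. 0"])
    show "open (B \<inter> {w. Im w < 0})" unfolding B_def by (intro open_Int open_ball open_halfspace_Im_lt)
    show "open B" unfolding B_def by simp
    have "r0 - \<i> * complex_of_real (1/4) \<in> B \<inter> {w. Im w < 0}"
      by (simp add: B_def r0_def dist_norm norm_mult)
    then show "B \<inter> {w. Im w < 0} \<noteq> {}" by blast
    show "connected B" unfolding B_def by (simp add: convex_connected)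
    show "B \<inter> {w. Im w < 0} \<subseteq> B" by auto
    show "g holomorphic_on B" by (rule hg)
    show "(\<lambda>_. 0) holomorphic_on B" by simp
    show "\<And>z. z \<in> B \<inter> {w. Im w < 0} \<Longrightarrow> g z = 0" by (simp add: g_def)
    show "w \<in> B" by (rule that)
  qed
  have F0: "F w = 0" if "w \<in> Xi1 uo" for w
  proof (rule analytic_continuation_open[of "B \<inter> {w. Im w > 0}" "Xi1 uo" F "\<lambda>_. 0"])
    show "open (B \<inter> {w. Im w > 0})" unfolding B_def by (intro open_Int open_ball open_halfspace_Im_gt)
    show "open (Xi1 uo)" by (rule open_Xi1)
    have "r0 + \<i> * complex_of_real (1/4) \<in> B \<inter> {w. Im w > 0}"
      by (simp add: B_def r0_def dist_norm norm_mult)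
    then show "B \<inter> {w. Im w > 0} \<noteq> {}" by blast
    show "connected (Xi1 uo)" using connected_Xi1 uo by simp
    show "B \<inter> {w. Im w > 0} \<subseteq> Xi1 uo" by (rule sub1)
    show "F holomorphic_on Xi1 uo" by (rule hol)
    show "(\<lambda>_. 0) holomorphic_on Xi1 uo" by simp
    show "F z = 0" if "z \<in> B \<inter> {w. Im w > 0}" for z
      using g0[of z] that by (simp add: g_def)
    show "w \<in> Xi1 uo" by (rule that)
  qed
  show ?thesis by (rule continuous_constant_on_closure[OF cont' F0 z])
qed



lemma NS:
  assumes "norm (v::cvec2) = uo"
  shows "cnj (csv (exp (\<i> * complex_of_real h)) v $ 1) * csv (exp (\<i> * complex_of_real h)) v $ 1
       + cnj (csv (exp (\<i> * complex_of_real h)) v $ 2) * csv (exp (\<i> * complex_of_real h)) v $ 2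
       = (complex_of_real uo)^2"
proof -
  define e where "e = exp (\<i> * complex_of_real h)"
  have e: "cnj e * e = 1" unfolding e_def by (rule exp_unit)
  have "(norm v)^2 = (cmod (v$1))^2 + (cmod (v$2))^2"
    by (simp add: norm_vec_def L2_set_def sum_2)
  then have "complex_of_real ((norm v)^2) = v $ 1 * cnj (v $ 1) + v $ 2 * cnj (v $ 2)"
    by (simp only: of_real_add complex_norm_square)
  then have n: "cnj (v $ 1) * v $ 1 + cnj (v $ 2) * v $ 2 = (complex_of_real uo)^2"
    using assms by (simp add: mult.commute)
  have "cnj (e * v $ 1) * (e * v $ 1) + cnj (e * v $ 2) * (e * v $ 2)
      = (cnj e * e) * (cnj (v $ 1) * v $ 1 + cnj (v $ 2) * v $ 2)"
    by (simp add: algebra_simps)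
  also have "\<dots> = (complex_of_real uo)^2" using e n by simp
  finally show ?thesis unfolding e_def[symmetric] by (simp add: csv_def)
qed

theorem proposition6:
  fixes a1 a2 uo hm hp :: real
    and uvec :: cvec2
    and u ux uxx uxxx ut :: "real \<Rightarrow> real \<Rightarrow> cvec2"
    and phim phip :: "complex \<Rightarrow> real \<Rightarrow> real \<Rightarrow> cmat3"
    and S :: "complex \<Rightarrow> cmat3"
    and s11 b11 b33 s33 :: "complex \<Rightarrow> complex"
    and zo :: complex
  defines "um \<equiv> csv (exp (\<i> * complex_of_real hm)) uvec"
      and "upl \<equiv> csv (exp (\<i> * complex_of_real hp)) uvec"
  assumes uo_pos: "uo > 0"
    and uvec_norm: "norm uvec = uo"
    and pde: "solves_eq a1 a2 uo u ux uxx uxxx ut"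
    and lim_m: "\<forall>t. ((\<lambda>x. u x t) \<longlongrightarrow> um) at_bot"
    and lim_p: "\<forall>t. ((\<lambda>x. u x t) \<longlongrightarrow> upl) at_top"
    and L1_m: "\<forall>t a. (\<lambda>x. u x t - um) absolutely_integrable_on {..a}"
    and L1_p: "\<forall>t a. (\<lambda>x. u x t - upl) absolutely_integrable_on {a..}"
    and jost_m: "\<forall>z \<in> Sigma_spec uo - {\<i> * uo, - \<i> * uo}.
                   jost a1 a2 uo u ux uxx um at_bot z (phim z)"
    and jost_p: "\<forall>z \<in> Sigma_spec uo - {\<i> * uo, - \<i> * uo}.
                   jost a1 a2 uo u ux uxx upl at_top z (phip z)"
    and scat: "\<forall>z \<in> Sigma_spec uo - {\<i> * uo, - \<i> * uo}. \<forall>x t.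
                   phim z x t = phip z x t ** S z"
    and s11_ext: "s11 holomorphic_on Xi1 uo" "continuous_on (closure (Xi1 uo) - {0}) s11"
                 "\<forall>z \<in> closure (Xi1 uo) \<inter> (Sigma_spec uo - {\<i> * uo, - \<i> * uo}).
                     s11 z = S z $ 1 $ 1"
    and b11_ext: "b11 holomorphic_on Xi2 uo" "continuous_on (closure (Xi2 uo) - {0}) b11"
                 "\<forall>z \<in> closure (Xi2 uo) \<inter> (Sigma_spec uo - {\<i> * uo, - \<i> * uo}).
                     b11 z = matrix_inv (S z) $ 1 $ 1"
    and b33_ext: "b33 holomorphic_on Xi3 uo" "continuous_on (closure (Xi3 uo) - {0}) b33"
                 "\<forall>z \<in> closure (Xi3 uo) \<inter> (Sigma_spec uo - {\<i> * uo, - \<i> * uo}).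
                     b33 z = matrix_inv (S z) $ 3 $ 3"
    and s33_ext: "s33 holomorphic_on Xi4 uo" "continuous_on (closure (Xi4 uo) - {0}) s33"
                 "\<forall>z \<in> closure (Xi4 uo) \<inter> (Sigma_spec uo - {\<i> * uo, - \<i> * uo}).
                     s33 z = S z $ 3 $ 3"
    and zo: "Im zo > 0" "cmod zo \<ge> uo"
  shows "(b11 (cnj zo) = 0 \<longleftrightarrow> s11 zo = 0)
       \<and> (s11 zo = 0 \<longleftrightarrow> b33 (- complex_of_real (uo^2) / cnj zo) = 0)
       \<and> (b33 (- complex_of_real (uo^2) / cnj zo) = 0 \<longleftrightarrow> s33 (- complex_of_real (uo^2) / zo) = 0)"
proof -
  have uo0: "uo \<noteq> 0" using uo_pos by simp
  have nm: "cnj (um $ 1) * um $ 1 + cnj (um $ 2) * um $ 2 = (complex_of_real uo)^2"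
    unfolding um_def by (rule NS[OF uvec_norm])
  have np: "cnj (upl $ 1) * upl $ 1 + cnj (upl $ 2) * upl $ 2 = (complex_of_real uo)^2"
    unfolding upl_def by (rule NS[OF uvec_norm])
  note PR = per_r[OF uo_pos _ nm np jost_m jost_p scat]
  define p where "p = (\<lambda>z::complex. - complex_of_real (uo^2) / z)"
  have c1sub: "closure (Xi1 uo) \<subseteq> {z. uo \<le> cmod z \<and> 0 \<le> Im z}" by (rule closure_Xi1_sub)
  have n0: "0 \<notin> closure (Xi1 uo)" using c1sub uo_pos by auto
  have X1nz: "z \<noteq> 0" if "z \<in> closure (Xi1 uo)" for z using that n0 by auto
  have cl_cnj: "cnj ` closure (Xi1 uo) \<subseteq> closure (Xi2 uo)"
  proof (rule image_closure_subset)
    show "continuous_on (closure (Xi1 uo)) cnj" by (intro continuous_intros)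
    show "closed (closure (Xi2 uo))" by simp
    show "cnj ` Xi1 uo \<subseteq> closure (Xi2 uo)"
      using closure_subset[of "Xi2 uo"] by (auto simp: Xi1_def Xi2_def)
  qed
  have pXi4: "p z \<in> Xi4 uo" if "z \<in> Xi1 uo" for z
  proof -
    have z0: "z \<noteq> 0" and zc: "cmod z > uo" and zi: "Im z > 0" using that uo_pos by (auto simp: Xi1_def)
    have "cmod (p z) = uo^2 / cmod z" by (simp add: p_def norm_divide norm_power)
    also have "\<dots> < uo" using zc uo_pos by (simp add: divide_less_eq power2_eq_square)
    finally have "cmod (p z) < uo" .
    moreover have "Im (p z) = uo^2 * Im z / (cmod z)^2" by (simp add: p_def Im_divide cmod_power2)
    moreover have "uo^2 * Im z / (cmod z)^2 > 0" using zi z0 uo_pos by simp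
    ultimately show ?thesis by (simp add: Xi4_def)
  qed
  have cpXi3: "cnj (p z) \<in> Xi3 uo" if "z \<in> Xi1 uo" for z
    using pXi4[OF that] by (simp add: Xi4_def Xi3_def)
  have pcont: "continuous_on (closure (Xi1 uo)) p"
    unfolding p_def by (intro continuous_intros) (use X1nz in auto)
  have cl_p: "p ` closure (Xi1 uo) \<subseteq> closure (Xi4 uo)"
  proof (rule image_closure_subset[OF pcont])
    show "closed (closure (Xi4 uo))" by simp
    show "p ` Xi1 uo \<subseteq> closure (Xi4 uo)" using pXi4 closure_subset[of "Xi4 uo"] by auto
  qed
  have cl_cp: "(\<lambda>z. cnj (p z)) ` closure (Xi1 uo) \<subseteq> closure (Xi3 uo)"
  proof (rule image_closure_subset)
    show "continuous_on (closure (Xi1 uo)) (\<lambda>z. cnj (p z))" using pcont by (intro continuous_intros)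
    show "closed (closure (Xi3 uo))" by simp
    show "(\<lambda>z. cnj (p z)) ` Xi1 uo \<subseteq> closure (Xi3 uo)" using cpXi3 closure_subset[of "Xi3 uo"] by auto
  qed
  have pnz: "p z \<noteq> 0" if "z \<noteq> 0" for z using that uo0 by (simp add: p_def)
  have p_real: "p (complex_of_real x) = complex_of_real (- (uo ^ 2) / x)" for x by (simp add: p_def)
  have realcl: "complex_of_real x \<in> closure (Xi1 uo)" if "x > uo" for x
    by (rule closure_Xi1_sup) (use that in auto)
  have spec: "complex_of_real x \<in> Sigma_spec uo - {\<i> * uo, - \<i> * uo}" if "x \<noteq> 0" for x
    by (rule real_in_spec[OF that uo0])
  define F1 where "F1 = (\<lambda>z. cnj (b11 (cnj z)) - s11 z)"
  have hF1: "F1 holomorphic_on Xi1 uo"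
  proof -
    have "b11 holomorphic_on cnj ` Xi1 uo"
      by (rule holomorphic_on_subset[OF b11_ext(1)]) (auto simp: Xi1_def Xi2_def)
    then have "(cnj \<circ> b11 \<circ> cnj) holomorphic_on Xi1 uo"
      by (rule holomorphic_on_compose_cnj_cnj) (rule open_Xi1)
    then have "(\<lambda>z. cnj (b11 (cnj z))) holomorphic_on Xi1 uo" by (simp add: o_def)
    then show ?thesis unfolding F1_def by (intro holomorphic_intros s11_ext(1))
  qed
  have cF1: "continuous_on (closure (Xi1 uo) - {0}) F1"
  proof -
    have "continuous_on (closure (Xi1 uo) - {0}) (\<lambda>z. b11 (cnj z))"
      by (rule continuous_on_compose2[OF b11_ext(2)]) (use cl_cnj in \<open>auto intro: continuous_intros\<close>)
    then show ?thesis unfolding F1_def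
      by (intro continuous_intros continuous_on_subset[OF s11_ext(2)]) auto
  qed
  have zF1: "F1 (complex_of_real x) = 0" if "x > uo" for x
  proof -
    have x0: "x \<noteq> 0" using that uo_pos by simp
    have "complex_of_real x \<in> closure (Xi2 uo)" using cl_cnj realcl[OF that] by force
    then have "b11 (complex_of_real x) = matrix_inv (S (complex_of_real x)) $ 1 $ 1"
      using b11_ext(3) spec[OF x0] by blast
    moreover have "s11 (complex_of_real x) = S (complex_of_real x) $ 1 $ 1"
      using s11_ext(3) spec[OF x0] realcl[OF that] by blast
    ultimately show ?thesis unfolding F1_def using PR(1)[OF x0] by simp
  qed
  define F2 where "F2 = (\<lambda>z. s11 z - s33 (p z))"
  have hp: "p holomorphic_on Xi1 uo"
    unfolding p_def by (intro holomorphic_intros) (auto simp: Xi1_def)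
  have hF2: "F2 holomorphic_on Xi1 uo"
  proof -
    have "(s33 \<circ> p) holomorphic_on Xi1 uo"
      by (rule holomorphic_on_compose_gen[OF hp s33_ext(1)]) (use pXi4 in auto)
    then show ?thesis unfolding F2_def o_def by (intro holomorphic_intros s11_ext(1))
  qed
  have cF2: "continuous_on (closure (Xi1 uo) - {0}) F2"
  proof -
    have "continuous_on (closure (Xi1 uo) - {0}) (\<lambda>z. s33 (p z))"
      by (rule continuous_on_compose2[OF s33_ext(2) continuous_on_subset[OF pcont]])
         (use cl_p pnz in auto)
    then show ?thesis unfolding F2_def
      by (intro continuous_intros continuous_on_subset[OF s11_ext(2)]) auto
  qed
  have zF2: "F2 (complex_of_real x) = 0" if "x > uo" for x
  proof -
    have x0: "x \<noteq> 0" using that uo_pos by simp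
    have xt0: "- (uo ^ 2) / x \<noteq> 0" using x0 uo0 by simp
    have "p (complex_of_real x) \<in> closure (Xi4 uo)" using cl_p realcl[OF that] by blast
    then have "s33 (p (complex_of_real x)) = S (complex_of_real (- (uo ^ 2) / x)) $ 3 $ 3"
      using s33_ext(3) spec[OF xt0] unfolding p_real by blast
    moreover have "s11 (complex_of_real x) = S (complex_of_real x) $ 1 $ 1"
      using s11_ext(3) spec[OF x0] realcl[OF that] by blast
    ultimately show ?thesis unfolding F2_def using PR(3)[OF x0] by simp
  qed
  define F3 where "F3 = (\<lambda>z. cnj (b33 (cnj (p z))) - s33 (p z))"
  have hF3: "F3 holomorphic_on Xi1 uo"
  proof -
    have "b33 holomorphic_on cnj ` Xi4 uo"
      by (rule holomorphic_on_subset[OF b33_ext(1)]) (auto simp: Xi4_def Xi3_def)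
    then have "(cnj \<circ> b33 \<circ> cnj) holomorphic_on Xi4 uo"
      by (rule holomorphic_on_compose_cnj_cnj) (simp add: Xi4_def open_Collect_conj open_Collect_less continuous_intros)
    then have "((cnj \<circ> b33 \<circ> cnj) \<circ> p) holomorphic_on Xi1 uo"
      by (rule holomorphic_on_compose_gen[OF hp]) (use pXi4 in auto)
    moreover have "(s33 \<circ> p) holomorphic_on Xi1 uo"
      by (rule holomorphic_on_compose_gen[OF hp s33_ext(1)]) (use pXi4 in auto)
    ultimately show ?thesis unfolding F3_def o_def by (intro holomorphic_intros)
  qed
  have cF3: "continuous_on (closure (Xi1 uo) - {0}) F3"
  proof -
    have "continuous_on (closure (Xi1 uo) - {0}) (\<lambda>z. s33 (p z))"
      by (rule continuous_on_compose2[OF s33_ext(2) continuous_on_subset[OF pcont]])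
         (use cl_p pnz in auto)
    moreover have "continuous_on (closure (Xi1 uo) - {0}) (\<lambda>z. b33 (cnj (p z)))"
      by (rule continuous_on_compose2[OF b33_ext(2)], rule continuous_intros,
          rule continuous_on_subset[OF pcont]) (use cl_cp pnz in auto)
    ultimately show ?thesis unfolding F3_def by (intro continuous_intros)
  qed
  have zF3: "F3 (complex_of_real x) = 0" if "x > uo" for x
  proof -
    have x0: "x \<noteq> 0" using that uo_pos by simp
    have xt0: "- (uo ^ 2) / x \<noteq> 0" using x0 uo0 by simp
    have "p (complex_of_real x) \<in> closure (Xi4 uo)" using cl_p realcl[OF that] by blast
    then have "s33 (p (complex_of_real x)) = S (complex_of_real (- (uo ^ 2) / x)) $ 3 $ 3"
      using s33_ext(3) spec[OF xt0] unfolding p_real by blast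
    moreover have "cnj (p (complex_of_real x)) \<in> closure (Xi3 uo)" using cl_cp realcl[OF that] by blast
    then have "b33 (cnj (p (complex_of_real x))) = matrix_inv (S (complex_of_real (- (uo ^ 2) / x))) $ 3 $ 3"
      using b33_ext(3) spec[OF xt0] unfolding p_real complex_cnj_complex_of_real by blast
    ultimately show ?thesis unfolding F3_def using PR(2)[OF xt0] by simp
  qed
  have zocl: "zo \<in> closure (Xi1 uo)" by (rule closure_Xi1_sup) (use zo in auto)
  have e1: "F1 zo = 0" by (rule ana[OF uo_pos hF1 cF1 zF1 zocl])
  have e2: "F2 zo = 0" by (rule ana[OF uo_pos hF2 cF2 zF2 zocl])
  have e3: "F3 zo = 0" by (rule ana[OF uo_pos hF3 cF3 zF3 zocl])
  have r1: "cnj (b11 (cnj zo)) = s11 zo" using e1 by (simp add: F1_def)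
  have r2: "s11 zo = s33 (p zo)" using e2 by (simp add: F2_def)
  have r3: "cnj (b33 (- complex_of_real (uo^2) / cnj zo)) = s33 (p zo)"
    using e3 by (simp add: F3_def p_def)
  have q1: "b11 (cnj zo) = 0 \<longleftrightarrow> s11 zo = 0" using r1 by (metis complex_cnj_zero_iff)
  have q3: "b33 (- complex_of_real (uo^2) / cnj zo) = 0 \<longleftrightarrow> s33 (p zo) = 0"
    using r3 by (metis complex_cnj_zero_iff)
  show ?thesis using q1 q3 r2 unfolding p_def by simp
qed

end
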